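(* In the setting described in the context, let $\gamma \in (0,\frac12)$, $\lambda_0 > 1$, $0 \leq k \leq q$, and $x \in \Omega$. Then there exist nonnegative real numbers $a_0,\dots,a_k$ with $\sum_{i=0}^k a_i = 1$ and $d\hat u_k = \sum_{i=0}^k a_i \, du_i$ at $x$. Moreover, $a_i = 0$ for every $0 \leq i \leq k$ satisfying $u_i(x) < \hat u_k(x) - 2k\lambda_i^{-1}$.
   Context: $n\ge 3$, $u_0,\dots,u_q$ are non-constant linear (affine) functions on $\mathbb{R}^n$, and $\Omega=\bigcap_{m=0}^q\{u_m\le 0\}$ is a compact convex polytope with non-empty interior. Fix a smooth even function $\eta:\mathbb{R}\to\mathbb{R}$ with $\eta(t)=|t|$ for $|t|\ge \frac12$ and $\eta''\ge 0$ everywhere. For $\gamma\in(0,\frac12)$ and $\lambda_0>1$ set $\lambda_k=\gamma^{-k}\lambda_0$ for $1\le k\le q$. Define $\hat u_0=u_0$ and, for $1\le k\le q$, $\hat u_k=\frac12\big(\hat u_{k-1}+u_k+\lambda_k^{-1}\eta(\lambda_k(\hat u_{k-1}-u_k))\big)$. *)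

theory Defs
  imports "HOL-Analysis.Analysis"
begin

definition smooth_fun :: "(real \<Rightarrow> real) \<Rightarrow> bool" where
  "smooth_fun f \<longleftrightarrow> (\<forall>m t. ((deriv ^^ m) f) differentiable (at t))"

definition lam :: "real \<Rightarrow> real \<Rightarrow> nat \<Rightarrow> real" where
  "lam \<gamma> l0 k = l0 / \<gamma> ^ k"

fun uhat :: "(nat \<Rightarrow> 'a \<Rightarrow> real) \<Rightarrow> (real \<Rightarrow> real) \<Rightarrow> real \<Rightarrow> real \<Rightarrow> nat \<Rightarrow> 'a \<Rightarrow> real" where
  "uhat u \<eta> \<gamma> l0 0 x = u 0 x"
| "uhat u \<eta> \<gamma> l0 (Suc k) x =
     (uhat u \<eta> \<gamma> l0 k x + u (Suc k) x
      + \<eta> (lam \<gamma> l0 (Suc k) * (uhat u \<eta> \<gamma> l0 k x - u (Suc k) x)) / lam \<gamma> l0 (Suc k)) / 2"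

end

theory Submission
  imports Defs
begin

lemma eta_props:
  fixes \<eta> :: "real \<Rightarrow> real"
  assumes sm: "smooth_fun \<eta>" and ab: "\<And>t. \<bar>t\<bar> \<ge> 1/2 \<Longrightarrow> \<eta> t = \<bar>t\<bar>"
    and cv: "\<And>t. (deriv ^^ 2) \<eta> t \<ge> 0"
  shows eta_D: "\<And>t. (\<eta> has_real_derivative deriv \<eta> t) (at t)"
    and eta_p1: "\<And>t. t > 1/2 \<Longrightarrow> deriv \<eta> t = 1"
    and eta_m1: "\<And>t. t < -1/2 \<Longrightarrow> deriv \<eta> t = -1"
    and eta_bd: "\<And>t. -1 \<le> deriv \<eta> t \<and> deriv \<eta> t \<le> 1"
    and eta_val: "\<And>t. \<bar>t\<bar> \<le> \<eta> t \<and> \<eta> t \<le> \<bar>t\<bar> + 1"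
proof -
  have d0: "\<eta> differentiable (at t)" for t using sm[unfolded smooth_fun_def, rule_format, of 0 t] by simp
  have d1: "deriv \<eta> differentiable (at t)" for t using sm[unfolded smooth_fun_def, rule_format, of 1 t] by simp
  show D0: "(\<eta> has_real_derivative deriv \<eta> t) (at t)" for t using d0 by (simp add: DERIV_deriv_iff_real_differentiable)
  have D1: "(deriv \<eta> has_real_derivative deriv (deriv \<eta>) t) (at t)" for t using d1 by (simp add: DERIV_deriv_iff_real_differentiable)
  have c2: "deriv (deriv \<eta>) t \<ge> 0" for t using cv[of t] by (simp add: numeral_2_eq_2)
  have mono: "deriv \<eta> s \<le> deriv \<eta> t" if "s \<le> t" for s t
  proof (rule DERIV_nonneg_imp_increasing_open[OF that])
    show "\<And>x. s < x \<Longrightarrow> x < t \<Longrightarrow> \<exists>y. (deriv \<eta> has_real_derivative y) (at x) \<and> 0 \<le> y"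
      using D1 c2 by blast
    show "continuous_on {s..t} (deriv \<eta>)"
      using D1 by (meson DERIV_isCont continuous_at_imp_continuous_on)
  qed
  show p1: "deriv \<eta> t = 1" if "t > 1/2" for t
  proof -
    have "((\<lambda>x. x) has_real_derivative 1) (at t)" by (rule DERIV_ident)
    then have "(\<eta> has_real_derivative 1) (at t)"
      by (rule has_field_derivative_transform_within_open[where S="{1/2<..}"]) (use that ab in auto)
    then show ?thesis using D0 DERIV_unique by blast
  qed
  show m1: "deriv \<eta> t = -1" if "t < -1/2" for t
  proof -
    have "((\<lambda>x. -x) has_real_derivative -1) (at t)" using DERIV_minus[OF DERIV_ident, of t UNIV] by simp
    then have "(\<eta> has_real_derivative -1) (at t)"
      by (rule has_field_derivative_transform_within_open[where S="{..< -1/2}"]) (use that ab in auto)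
    then show ?thesis using D0 DERIV_unique by blast
  qed
  show bd: "-1 \<le> deriv \<eta> t \<and> deriv \<eta> t \<le> 1" for t
    using mono[of t "max t 1"] mono[of "min t (-1)" t] p1[of "max t 1"] m1[of "min t (-1)"] by auto
  have lip: "\<bar>\<eta> t - \<eta> s\<bar> \<le> \<bar>t - s\<bar>" for s t
  proof -
    have *: "\<bar>\<eta> b - \<eta> a\<bar> \<le> b - a" if ab0: "a < b" for a b
    proof -
      obtain z where "\<eta> b - \<eta> a = (b - a) * deriv \<eta> z" using MVT2[of a b \<eta> "deriv \<eta>"] ab0 D0 by blast
      moreover have "\<bar>deriv \<eta> z\<bar> \<le> 1" using bd[of z] by auto
      ultimately show ?thesis using ab0 by (simp add: abs_mult mult_left_le)
    qed
    show ?thesis using *[of s t] *[of t s] by (cases "s < t"; cases "t < s"; auto)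
  qed
  show "\<bar>t\<bar> \<le> \<eta> t \<and> \<eta> t \<le> \<bar>t\<bar> + 1" for t
  proof (cases "\<bar>t\<bar> \<ge> 1/2")
    case True then show ?thesis using ab by simp
  next
    case False
    have a1: "\<eta> (1/2) = 1/2" "\<eta> (-1/2) = 1/2" using ab by auto
    show ?thesis using lip[of t "1/2"] lip[of t "-1/2"] a1 False by (auto simp: abs_if split: if_splits)
  qed
qed

lemma lin_help:
  fixes v w m tl ti :: real
  assumes "m = max v w" "v < m + tl / 2 - 2 * ti" "tl \<le> ti" "0 < ti"
  shows "w - v > 3/2 * ti"
  using assms by (auto simp: max_def split: if_splits)

lemma main_ind:
  fixes u :: "nat \<Rightarrow> 'a::real_inner \<Rightarrow> real" and \<eta> :: "real \<Rightarrow> real"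
  assumes aff: "\<And>m. m \<le> q \<Longrightarrow> u m = (\<lambda>y. c m \<bullet> y + b m)"
    and eD: "\<And>t. (\<eta> has_real_derivative deriv \<eta> t) (at t)"
    and ep1: "\<And>t. t > 1/2 \<Longrightarrow> deriv \<eta> t = 1"
    and em1: "\<And>t. t < -1/2 \<Longrightarrow> deriv \<eta> t = -1"
    and ebd: "\<And>t. -1 \<le> deriv \<eta> t \<and> deriv \<eta> t \<le> 1"
    and eval: "\<And>t. \<bar>t\<bar> \<le> \<eta> t \<and> \<eta> t \<le> \<bar>t\<bar> + 1"
    and g0: "0 < \<gamma>" and g1: "\<gamma> \<le> 1" and l0: "l0 > 0"
  shows "k \<le> q \<Longrightarrow> \<exists>a :: nat \<Rightarrow> real.
           (\<forall>i\<le>k. a i \<ge> 0) \<and> (\<Sum>i\<le>k. a i) = 1 \<and>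
           (uhat u \<eta> \<gamma> l0 k has_derivative (\<lambda>h. \<Sum>i\<le>k. a i * (c i \<bullet> h))) (at x) \<and>
           (\<forall>i\<le>k. u i x < uhat u \<eta> \<gamma> l0 k x - 2 * real k / lam \<gamma> l0 i \<longrightarrow> a i = 0)"
proof (induction k)
  case 0
  have "u 0 = (\<lambda>y. c 0 \<bullet> y + b 0)" using aff[of 0] by simp
  then have "(u 0 has_derivative (\<lambda>h. c 0 \<bullet> h)) (at x)"
    by (auto intro!: derivative_eq_intros)
  then show ?case by (intro exI[of _ "\<lambda>i. 1"]) auto
next
  case (Suc k)
  have lampos: "lam \<gamma> l0 i > 0" for i using g0 l0 by (simp add: lam_def)
  have lammono: "lam \<gamma> l0 i \<le> lam \<gamma> l0 j" if "i \<le> j" for i j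
    unfolding lam_def using g0 g1 l0 that
    by (intro divide_left_mono power_decreasing mult_pos_pos) auto
  from Suc obtain a where a0: "\<forall>i\<le>k. a i \<ge> 0" and a1: "(\<Sum>i\<le>k. a i) = 1"
    and aD: "(uhat u \<eta> \<gamma> l0 k has_derivative (\<lambda>h. \<Sum>i\<le>k. a i * (c i \<bullet> h))) (at x)"
    and aZ: "\<forall>i\<le>k. u i x < uhat u \<eta> \<gamma> l0 k x - 2 * real k / lam \<gamma> l0 i \<longrightarrow> a i = 0" by auto
  define V where "V = uhat u \<eta> \<gamma> l0 k"
  define L where "L = lam \<gamma> l0 (Suc k)"
  define z where "z = L * (V x - u (Suc k) x)"
  define s where "s = deriv \<eta> z"
  define DV where "DV = (\<lambda>h. \<Sum>i\<le>k. a i * (c i \<bullet> h))"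
  define a' where "a' = (\<lambda>i. if i \<le> k then (1 + s) / 2 * a i else (1 - s) / 2)"
  have Lpos: "L > 0" using lampos L_def by simp
  have uS: "u (Suc k) = (\<lambda>y. c (Suc k) \<bullet> y + b (Suc k))" using aff Suc.prems by simp
  have HV: "(V has_derivative DV) (at x)" using aD V_def DV_def by simp
  have HW: "(u (Suc k) has_derivative (\<lambda>h. c (Suc k) \<bullet> h)) (at x)"
    unfolding uS by (auto intro!: derivative_eq_intros)
  have Hg: "((\<lambda>y. L * (V y - u (Suc k) y)) has_derivative (\<lambda>h. L * (DV h - c (Suc k) \<bullet> h))) (at x)"
    by (intro derivative_intros HV HW)
  have He: "(\<eta> has_derivative (\<lambda>h. s * h)) (at z)"
    using eD[of z] unfolding s_def has_field_derivative_def by simp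
  have Hc: "((\<lambda>y. \<eta> (L * (V y - u (Suc k) y))) has_derivative (\<lambda>h. s * (L * (DV h - c (Suc k) \<bullet> h)))) (at x)"
    using diff_chain_at[OF Hg, of \<eta> "\<lambda>h. s * h"] He z_def by (simp add: o_def)
  have Hall: "((\<lambda>y. (V y + u (Suc k) y + \<eta> (L * (V y - u (Suc k) y)) / L) / 2) has_derivative
      (\<lambda>h. (DV h + c (Suc k) \<bullet> h + s * (L * (DV h - c (Suc k) \<bullet> h)) / L) / 2)) (at x)"
  proof -
    have H: "((\<lambda>y. (V y + u (Suc k) y) * (1/2) + \<eta> (L * (V y - u (Suc k) y)) * (1/L) * (1/2)) has_derivative
      (\<lambda>h. (DV h + c (Suc k) \<bullet> h) * (1/2) + s * (L * (DV h - c (Suc k) \<bullet> h)) * (1/L) * (1/2))) (at x)"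
      by (intro has_derivative_add has_derivative_mult_left HV HW Hc)
    have e1: "(\<lambda>y. (V y + u (Suc k) y + \<eta> (L * (V y - u (Suc k) y)) / L) / 2)
       = (\<lambda>y. (V y + u (Suc k) y) * (1/2) + \<eta> (L * (V y - u (Suc k) y)) * (1/L) * (1/2))"
      by (simp add: fun_eq_iff field_simps)
    have e2: "(\<lambda>h. (DV h + c (Suc k) \<bullet> h + s * (L * (DV h - c (Suc k) \<bullet> h)) / L) / 2)
       = (\<lambda>h. (DV h + c (Suc k) \<bullet> h) * (1/2) + s * (L * (DV h - c (Suc k) \<bullet> h)) * (1/L) * (1/2))"
      using Lpos by (simp add: fun_eq_iff field_simps)
    show ?thesis unfolding e1 e2 by (rule H)
  qed

  have eqf: "uhat u \<eta> \<gamma> l0 (Suc k) = (\<lambda>y. (V y + u (Suc k) y + \<eta> (L * (V y - u (Suc k) y)) / L) / 2)"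
    by (rule ext) (simp add: V_def L_def)
  have eqd: "(\<lambda>h. (DV h + c (Suc k) \<bullet> h + s * (L * (DV h - c (Suc k) \<bullet> h)) / L) / 2)
      = (\<lambda>h. \<Sum>i\<le>Suc k. a' i * (c i \<bullet> h))"
  proof
    fix h
    have "(\<Sum>i\<le>Suc k. a' i * (c i \<bullet> h)) = (\<Sum>i\<le>k. (1 + s) / 2 * (a i * (c i \<bullet> h))) + (1 - s) / 2 * (c (Suc k) \<bullet> h)"
      by (simp add: a'_def mult.assoc)
    also have "\<dots> = (1 + s) / 2 * DV h + (1 - s) / 2 * (c (Suc k) \<bullet> h)"
      by (simp add: DV_def sum_distrib_left)
    finally have A: "(\<Sum>i\<le>Suc k. a' i * (c i \<bullet> h)) = (1 + s) / 2 * DV h + (1 - s) / 2 * (c (Suc k) \<bullet> h)" .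
    have B: "(DV h + c (Suc k) \<bullet> h + s * (L * (DV h - c (Suc k) \<bullet> h)) / L) / 2 = (1 + s) / 2 * DV h + (1 - s) / 2 * (c (Suc k) \<bullet> h)"
      using Lpos by (simp add: field_simps)
    show "(DV h + c (Suc k) \<bullet> h + s * (L * (DV h - c (Suc k) \<bullet> h)) / L) / 2 = (\<Sum>i\<le>Suc k. a' i * (c i \<bullet> h))"
      unfolding A B ..
  qed
  have D': "(uhat u \<eta> \<gamma> l0 (Suc k) has_derivative (\<lambda>h. \<Sum>i\<le>Suc k. a' i * (c i \<bullet> h))) (at x)"
    using Hall eqf eqd by simp
  have sb: "-1 \<le> s" "s \<le> 1" using ebd[of z] s_def by auto
  have nn: "\<forall>i\<le>Suc k. a' i \<ge> 0" using a0 sb by (auto simp: a'_def)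
  have sm: "(\<Sum>i\<le>Suc k. a' i) = 1"
  proof -
    have "(\<Sum>i\<le>Suc k. a' i) = (\<Sum>i\<le>k. (1 + s) / 2 * a i) + (1 - s) / 2" by (simp add: a'_def)
    also have "\<dots> = (1 + s) / 2 * (\<Sum>i\<le>k. a i) + (1 - s) / 2" by (simp add: sum_distrib_left)
    also have "\<dots> = 1" using a1 by (simp add: field_simps)
    finally show ?thesis .
  qed
  define U where "U = uhat u \<eta> \<gamma> l0 (Suc k) x"
  define W where "W = u (Suc k) x"
  have Ueq: "U = (V x + W + \<eta> z / L) / 2" using eqf U_def W_def z_def by simp
  have ez: "\<bar>z\<bar> \<le> \<eta> z" "\<eta> z \<le> \<bar>z\<bar> + 1" using eval[of z] by auto
  have zq: "\<eta> z / L \<le> \<bar>V x - W\<bar> + 1 / L" "\<bar>V x - W\<bar> \<le> \<eta> z / L"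
  proof -
    have za: "\<bar>z\<bar> = L * \<bar>V x - W\<bar>" using Lpos by (simp add: z_def W_def abs_mult)
    show "\<eta> z / L \<le> \<bar>V x - W\<bar> + 1 / L" using ez za Lpos by (simp add: pos_divide_le_eq field_simps)
    show "\<bar>V x - W\<bar> \<le> \<eta> z / L" using ez za Lpos by (simp add: pos_le_divide_eq field_simps)
  qed
  have Ub: "U \<le> max (V x) W + 1 / (2 * L)" proof -
    have gen: "U' \<le> max p r + t / 2" if "U' = (p + r + e) / 2" "e \<le> \<bar>p - r\<bar> + t" for U' p r e t :: real
      using that by (auto simp: max_def abs_if split: if_splits)
    have "1 / (2 * L) = (1 / L) / 2" by simp
    then show ?thesis using gen[OF Ueq zq(1)] by simp
  qed
  have zero: "a' i = 0" if i: "i \<le> Suc k" and lt: "u i x < U - 2 * real (Suc k) / lam \<gamma> l0 i" for i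
  proof (cases "i = Suc k")
    case True
    have lt': "W < U - 2 * real (Suc k) * (1 / L)" using lt True W_def L_def by simp
    have "1 / L > 0" using Lpos by simp
    define t where "t = 1 / L"
    have t0: "t > 0" using Lpos t_def by simp
    have h1: "2 * t \<le> 2 * real (Suc k) * t" using t0 by simp
    have h2: "1 / (2 * L) = t / 2" using t_def by simp
    have lt2: "W < U - 2 * real (Suc k) * t" using lt' t_def by simp
    have Ub2: "U \<le> max (V x) W + t / 2" using Ub h2 by simp
    have "V x - W > 3/2 * t"
    proof (cases "V x \<le> W")
      case True then have "max (V x) W = W" by simp
      then show ?thesis using lt2 Ub2 h1 t0 by linarith
    next
      case False then have "max (V x) W = V x" by simp
      then show ?thesis using lt2 Ub2 h1 t0 by linarith
    qed
    then have "V x - W > 3/2 * (1 / L)" using t_def by simp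
    then have "z > 3/2" unfolding z_def W_def using Lpos by (simp add: field_simps)
    then have "s = 1" using ep1 s_def by simp
    then show ?thesis using True by (simp add: a'_def)
  next
    case False
    then have ik: "i \<le> k" using i by simp
    define Li where "Li = lam \<gamma> l0 i"
    have Lipos: "Li > 0" using lampos Li_def by simp
    have LiL: "Li \<le> L" using lammono[of i "Suc k"] ik Li_def L_def by simp
    have invL: "1 / L \<le> 1 / Li" using LiL Lipos by (simp add: frac_le)
    show ?thesis
    proof (cases "a i = 0")
      case True then show ?thesis using ik by (simp add: a'_def)
    next
      case False
      then have "u i x \<ge> V x - 2 * real k * (1 / Li)" using aZ ik V_def Li_def by force
      moreover have "u i x < U - 2 * real (Suc k) * (1 / Li)" using lt Li_def by simp
      ultimately have "V x < U - 2 * (1 / Li)" by (simp add: algebra_simps)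
      moreover have "1 / (2 * L) = (1 / L) / 2" by simp
      ultimately have "V x < max (V x) W + (1 / L) / 2 - 2 * (1 / Li)" using Ub by simp
      then have WV3: "W - V x > 3/2 * (1 / Li)"
        by (rule lin_help[OF refl _ invL, of "V x" W]) (use Lipos in simp)
      moreover have "3/2 * (1 / Li) > 0" using Lipos by simp
      ultimately have WV: "W - V x > 0" by linarith
      have "Li * (W - V x) > 3/2" using WV3 Lipos by (simp add: field_simps)
      moreover have "Li * (W - V x) \<le> L * (W - V x)" using LiL WV
        by (intro mult_right_mono) auto
      ultimately have "z < -1/2" unfolding z_def W_def by (simp add: algebra_simps)
      then have "s = -1" using em1 s_def by simp
      then show ?thesis using ik by (simp add: a'_def)
    qed
  qed
  have zero': "\<forall>i\<le>Suc k. u i x < uhat u \<eta> \<gamma> l0 (Suc k) x - 2 * real (Suc k) / lam \<gamma> l0 i \<longrightarrow> a' i = 0"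
    using zero unfolding U_def by blast
  show ?case
    by (rule exI[of _ a'], intro conjI nn sm D' zero')
qed

theorem lemma2p9:
  fixes u :: "nat \<Rightarrow> real ^ 'n \<Rightarrow> real"
    and c :: "nat \<Rightarrow> real ^ 'n" and b :: "nat \<Rightarrow> real"
    and q k :: nat and \<eta> :: "real \<Rightarrow> real" and \<gamma> l0 :: real
    and \<Omega> :: "(real ^ 'n) set" and x :: "real ^ 'n"
  assumes dim: "CARD('n) \<ge> 3"
    and affine_u: "\<And>m. m \<le> q \<Longrightarrow> u m = (\<lambda>y. c m \<bullet> y + b m)"
    and nonconst: "\<And>m. m \<le> q \<Longrightarrow> c m \<noteq> 0"
    and Omega_def: "\<Omega> = {y. \<forall>m\<le>q. u m y \<le> 0}"
    and Omega_compact: "compact \<Omega>"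
    and Omega_int: "interior \<Omega> \<noteq> {}"
    and eta_smooth: "smooth_fun \<eta>"
    and eta_even: "\<And>t. \<eta> (- t) = \<eta> t"
    and eta_abs: "\<And>t. \<bar>t\<bar> \<ge> 1/2 \<Longrightarrow> \<eta> t = \<bar>t\<bar>"
    and eta_convex: "\<And>t. (deriv ^^ 2) \<eta> t \<ge> 0"
    and gamma: "0 < \<gamma>" "\<gamma> < 1/2"
    and lambda0: "l0 > 1"
    and k: "k \<le> q"
    and x: "x \<in> \<Omega>"
  shows "\<exists>a :: nat \<Rightarrow> real.
           (\<forall>i\<le>k. a i \<ge> 0) \<and> (\<Sum>i\<le>k. a i) = 1 \<and>
           (uhat u \<eta> \<gamma> l0 k has_derivative (\<lambda>h. \<Sum>i\<le>k. a i * (c i \<bullet> h))) (at x) \<and>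
           (\<forall>i\<le>k. u i x < uhat u \<eta> \<gamma> l0 k x - 2 * real k / lam \<gamma> l0 i \<longrightarrow> a i = 0)"
proof -
  have E: "\<And>t. (\<eta> has_real_derivative deriv \<eta> t) (at t)"
    "\<And>t. t > 1/2 \<Longrightarrow> deriv \<eta> t = 1"
    "\<And>t. t < -1/2 \<Longrightarrow> deriv \<eta> t = -1"
    "\<And>t. -1 \<le> deriv \<eta> t \<and> deriv \<eta> t \<le> 1"
    "\<And>t. \<bar>t\<bar> \<le> \<eta> t \<and> \<eta> t \<le> \<bar>t\<bar> + 1"
    using eta_props[OF eta_smooth eta_abs eta_convex] by blast+
  show ?thesis
    by (rule main_ind[OF affine_u E(1) E(2) E(3) E(4) E(5) gamma(1) _ _ k]) (use gamma lambda0 in auto)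
qed

end
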